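(* For $n\ge 4$, the dom-bondage number of the path $P_n$ is $B_{dom}(P_n)=2$ if $n\equiv 2\pmod 4$, and $B_{dom}(P_n)=1$ otherwise.
   Context: A dominated coloring of a graph is a proper coloring in which every color class is dominated by at least one vertex, i.e. for each color class $C$ there is a vertex adjacent to every vertex of $C$; $\chi_{dom}(G)$ is the minimum number of colors in a dominated coloring. The dom-bondage number $B_{dom}(G)$ is the minimum number of edges of $G$ whose removal changes the dominated chromatic number of $G$. *)

theory Defs
  imports Main
begin

definition adj :: "'a set set \<Rightarrow> 'a \<Rightarrow> 'a \<Rightarrow> bool" where
  "adj E u v \<longleftrightarrow> u \<noteq> v \<and> {u, v} \<in> E"

definition no_isolated :: "'a set \<Rightarrow> 'a set set \<Rightarrow> bool" where
  "no_isolated V E \<longleftrightarrow> (\<forall>v\<in>V. \<exists>w\<in>V. adj E w v)"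

definition dominated_coloring :: "'a set \<Rightarrow> 'a set set \<Rightarrow> nat \<Rightarrow> ('a \<Rightarrow> nat) \<Rightarrow> bool" where
  "dominated_coloring V E k c \<longleftrightarrow>
     (\<forall>v\<in>V. c v < k) \<and>
     (\<forall>u\<in>V. \<forall>v\<in>V. adj E u v \<longrightarrow> c u \<noteq> c v) \<and>
     (\<forall>i<k. \<exists>w\<in>V. \<forall>v\<in>V. c v = i \<longrightarrow> adj E w v)"

definition chi_dom :: "'a set \<Rightarrow> 'a set set \<Rightarrow> nat" where
  "chi_dom V E = (LEAST k. \<exists>c. dominated_coloring V E k c)"

text \<open>Dom-bondage number: least number of edges whose removal changes chi_dom
  (the resulting graph is required to have no isolated vertices, so that
  chi_dom of it is defined).\<close>
definition B_dom :: "'a set \<Rightarrow> 'a set set \<Rightarrow> nat" where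
  "B_dom V E = (LEAST m. \<exists>F. F \<subseteq> E \<and> card F = m \<and> no_isolated V (E - F) \<and>
                        chi_dom V (E - F) \<noteq> chi_dom V E)"

definition path_edges :: "nat \<Rightarrow> nat set set" where
  "path_edges n = {{i, Suc i} | i. Suc i < n}"

end

theory Submission
  imports Defs
begin
definition gcol :: "nat \<Rightarrow> nat" where "gcol j = 2*(j div 4) + j mod 2"
definition fL :: "nat \<Rightarrow> nat" where
  "fL L = 2*(L div 4) + (if L mod 4 = 0 then 0 else if L mod 4 = 1 then 1 else 2)"
lemma dec4: "(\<And>q r. r < 4 \<Longrightarrow> n = 4*q+r \<Longrightarrow> P) \<Longrightarrow> (P::bool)" for n :: nat
proof -
  assume h: "\<And>q r. r < 4 \<Longrightarrow> n = 4*q+r \<Longrightarrow> P"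
  have "n mod 4 < 4" by simp
  moreover have "n = 4*(n div 4) + n mod 4" by simp
  ultimately show P by (rule h)
qed
lemma ndec: "n = 4*(n div 4) + n mod 4 \<and> n mod 4 < 4" for n :: nat by simp
lemma r4: "(r::nat) < 4 \<longleftrightarrow> r = 0 \<or> r = 1 \<or> r = 2 \<or> r = 3" by auto
lemma m2: "(4*q + r) mod 2 = r mod 2" for q r :: nat
proof -
  have "4*q + r = r + 2*(2*q)" by simp
  then show ?thesis by (simp only: mod_mult_self2)
qed
lemma d2: "(4*q + r) div 2 = 2*q + r div 2" for q r :: nat by simp
lemma d2b: "(4*q + r + 1) div 2 = 2*q + (r+1) div 2" for q r :: nat by simp
lemma gcol4: "r < 4 \<Longrightarrow> gcol (4*q+r) = 2*q + r mod 2" unfolding gcol_def by (auto simp: m2)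
lemma fL4: "r < 4 \<Longrightarrow> fL (4*q+r) = 2*q + (if r = 0 then 0 else if r = 1 then 1 else 2)" unfolding fL_def by (auto simp: r4)
lemma gcol_lt: "j < L \<Longrightarrow> gcol j < fL L"
  by (rule dec4[of j], rule dec4[of L]) (auto simp: gcol4 fL4 r4; presburger)
lemma gcol_m: "i < fL L \<Longrightarrow> 4*(i div 2) + i mod 2 < L"
  by (rule dec4[of i], rule dec4[of L]) (auto simp: fL4 r4 m2 d2; presburger)
lemma gcol_inv: "j = 4*(gcol j div 2) + gcol j mod 2 \<or> j = 4*(gcol j div 2) + gcol j mod 2 + 2"
  by (rule dec4[of j]) (auto simp: gcol4 r4 m2 d2)
lemma gcol_Suc: "gcol (Suc j) \<noteq> gcol j"
proof
  have p: "even (gcol x) \<longleftrightarrow> even x" for x unfolding gcol_def by simp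
  assume "gcol (Suc j) = gcol j"
  then have "even (Suc j) \<longleftrightarrow> even j" using p by metis
  then show False by simp
qed
lemma fL_add: assumes "(a + b) mod 4 = 2" shows "fL a + fL b = fL (a + b)"
proof -
  obtain q r where a: "a = 4*q+r" "r < 4" using ndec by blast
  obtain q' r' where b: "b = 4*q'+r'" "r' < 4" using ndec by blast
  have ab: "a + b = 4*(q+q'+(r+r') div 4) + (r+r') mod 4" using a b by simp
  have "a + b = (r+r') + 4*(q+q')" using a b by simp
  then have "(a + b) mod 4 = (r+r') mod 4" by (simp only: mod_mult_self2)
  then have m: "(r + r') mod 4 = 2" using assms by simp
  have "fL (a+b) = 2*(q+q'+(r+r') div 4) + (if (r+r') mod 4 = 0 then 0 else if (r+r') mod 4 = 1 then 1 else 2)"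
    unfolding ab by (rule fL4) simp
  moreover have "fL a = 2*q + (if r = 0 then 0 else if r = 1 then 1 else 2)" using a fL4 by simp
  moreover have "fL b = 2*q' + (if r' = 0 then 0 else if r' = 1 then 1 else 2)" using b fL4 by simp
  ultimately show ?thesis using a(2) b(2) m unfolding r4 by (elim disjE) simp_all
qed
lemma fL_split: "n mod 4 = 2 \<Longrightarrow> a \<le> n \<Longrightarrow> fL a + fL (n - a) = fL n"
  using fL_add[of a "n - a"] by simp
lemma fL_path: "x + y \<le> (k::nat) \<Longrightarrow> (n + 1) div 2 \<le> 2*x \<Longrightarrow> n div 2 \<le> 2*y \<Longrightarrow> fL n \<le> k"
proof -
  assume a: "x + y \<le> (k::nat)" "(n + 1) div 2 \<le> 2*x" "n div 2 \<le> 2*y"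
  obtain q r where n: "n = 4*q+r" "r < 4" using ndec by blast
  have b: "2*q + (r+1) div 2 \<le> 2*x" "2*q + r div 2 \<le> 2*y" using a(2,3) unfolding n(1) d2 d2b by auto
  have f: "fL n = 2*q + (if r = 0 then 0 else if r = 1 then 1 else 2)" using fL4 n by simp
  have "2*q + (if r = 0 then 0 else if r = 1 then 1 else 2) \<le> k" using n(2) b a(1) unfolding r4
    apply (elim disjE) apply simp_all  apply arith done
  then show ?thesis using f by simp
qed
lemma fL_1: "4 \<le> n \<Longrightarrow> n mod 4 \<noteq> 2 \<Longrightarrow> 2 + x + y \<le> (k::nat) \<Longrightarrow> (n - 2 + 1) div 2 \<le> 2*x \<Longrightarrow> (n-2) div 2 \<le> 2*y \<Longrightarrow> fL n < k"
  by (rule dec4[of n]) (auto simp: fL4 r4; presburger)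
lemma fL_2: "4 \<le> n \<Longrightarrow> 4 + x + y \<le> (k::nat) \<Longrightarrow> (n - 4 + 1) div 2 \<le> 2*x \<Longrightarrow> (n-4) div 2 \<le> 2*y \<Longrightarrow> fL n < k"
  by (rule dec4[of n]) (auto simp: fL4 r4; presburger)

lemma pe_mem: "Suc a < n \<Longrightarrow> {a, Suc a} \<in> path_edges n" by (auto simp: path_edges_def)
lemma pe_mem': "Suc a < n \<Longrightarrow> {Suc a, a} \<in> path_edges n" by (auto simp: path_edges_def insert_commute)
lemma pe_cases: "{a,b} \<in> path_edges n \<Longrightarrow> (b = Suc a \<or> a = Suc b) \<and> a < n \<and> b < n"
  by (auto simp: path_edges_def doubleton_eq_iff)

lemma adj_path: "adj E' w u \<Longrightarrow> E' \<subseteq> path_edges n \<Longrightarrow> (u = Suc w \<or> w = Suc u) \<and> w < n \<and> u < n"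
  unfolding adj_def using pe_cases by blast

lemma same_col:
  assumes dc: "dominated_coloring {0..<n} E' k c" and sub: "E' \<subseteq> path_edges n"
    and uv: "u < n" "v < n" "u < v" "c u = c v"
  shows "v = Suc (Suc u) \<and> {u, Suc u} \<in> E' \<and> {Suc u, Suc (Suc u)} \<in> E'"
proof -
  have "c u < k" using dc uv unfolding dominated_coloring_def by auto
  then obtain w where w: "w < n" "\<forall>x\<in>{0..<n}. c x = c u \<longrightarrow> adj E' w x"
    using dc unfolding dominated_coloring_def by auto
  have a1: "adj E' w u" and a2: "adj E' w v" using w uv by auto
  from adj_path[OF a1 sub] adj_path[OF a2 sub] uv have "w = Suc u" "v = Suc w" by auto
  with a1 a2 show ?thesis unfolding adj_def by (auto simp: insert_commute)
qed

lemma fiber_card: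
  assumes fin: "finite A" and h: "\<forall>u\<in>A. \<forall>v\<in>A. u < v \<longrightarrow> c u = c v \<longrightarrow> v = Suc (Suc u)"
  shows "card A \<le> 2 * card (c ` A)"
proof -
  have fib: "card {x\<in>A. c x = i} \<le> 2" for i
  proof (cases "{x\<in>A. c x = i} = {}")
    case True then show ?thesis unfolding True by simp
  next
    case False
    let ?F = "{x\<in>A. c x = i}"
    define m where "m = Min ?F"
    have fF: "finite ?F" using fin by simp
    have mF: "m \<in> ?F" using Min_in[OF fF False] m_def by simp
    have "?F \<subseteq> {m, Suc (Suc m)}"
    proof
      fix y assume y: "y \<in> ?F"
      have "m \<le> y" using Min_le[OF fF y] m_def by simp
      then show "y \<in> {m, Suc (Suc m)}" using h mF y by (cases "m = y") auto
    qed
    then have "card ?F \<le> card {m, Suc (Suc m)}" by (rule card_mono[rotated]) simp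
    also have "\<dots> \<le> 2" by simp
    finally show ?thesis .
  qed
  have "A = (\<Union>i\<in>c`A. {x\<in>A. c x = i})" by auto
  then have "card A = card (\<Union>i\<in>c`A. {x\<in>A. c x = i})" by simp
  also have "\<dots> \<le> (\<Sum>i\<in>c`A. card {x\<in>A. c x = i})" by (rule card_UN_le) (simp add: fin)
  also have "\<dots> \<le> (\<Sum>i\<in>c`A. 2)" by (rule sum_mono) (rule fib)
  also have "\<dots> = 2 * card (c`A)" by simp
  finally show ?thesis .
qed

lemma LB:
  assumes dc: "dominated_coloring {0..<n} E' k c" and sub: "E' \<subseteq> path_edges n" and sn: "s \<le> n"
  shows "\<exists>x y. card (c ` {s..<n}) = x + y \<and> (n - s + 1) div 2 \<le> 2*x \<and> (n-s) div 2 \<le> 2*y"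
proof -
  define Ev where "Ev = {v\<in>{s..<n}. even (v - s)}"
  define Od where "Od = {v\<in>{s..<n}. odd (v - s)}"
  have h: "\<forall>u\<in>{s..<n}. \<forall>v\<in>{s..<n}. u < v \<longrightarrow> c u = c v \<longrightarrow> v = Suc (Suc u)"
    using same_col[OF dc sub] by auto
  have cEv: "card Ev \<le> 2 * card (c ` Ev)" by (rule fiber_card) (use h in \<open>auto simp: Ev_def\<close>)
  have cOd: "card Od \<le> 2 * card (c ` Od)" by (rule fiber_card) (use h in \<open>auto simp: Od_def\<close>)
  have Ev_eq: "Ev = (\<lambda>j. s + 2*j) ` {..<(n - s + 1) div 2}"
  proof (rule set_eqI, rule iffI)
    fix x assume "x \<in> Ev"
    then have "x = s + 2*((x-s) div 2) \<and> (x-s) div 2 < (n-s+1) div 2" unfolding Ev_def by (auto; presburger)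
    then show "x \<in> (\<lambda>j. s + 2*j) ` {..<(n - s + 1) div 2}" by blast
  next
    fix x assume "x \<in> (\<lambda>j. s + 2*j) ` {..<(n - s + 1) div 2}"
    then obtain j where "j < (n - s + 1) div 2" "x = s + 2*j" by auto
    then show "x \<in> Ev" unfolding Ev_def by (auto; presburger)
  qed
  have Od_eq: "Od = (\<lambda>j. s + 1 + 2*j) ` {..<(n - s) div 2}"
  proof (rule set_eqI, rule iffI)
    fix x assume "x \<in> Od"
    then have "x = s + 1 + 2*((x-s) div 2) \<and> (x-s) div 2 < (n-s) div 2" unfolding Od_def by (auto; presburger)
    then show "x \<in> (\<lambda>j. s + 1 + 2*j) ` {..<(n - s) div 2}" by blast
  next
    fix x assume "x \<in> (\<lambda>j. s + 1 + 2*j) ` {..<(n - s) div 2}"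
    then obtain j where "j < (n - s) div 2" "x = s + 1 + 2*j" by auto
    then show "x \<in> Od" unfolding Od_def by (auto; presburger)
  qed
  have cardEv: "card Ev = (n - s + 1) div 2" unfolding Ev_eq by (subst card_image) (auto simp: inj_on_def)
  have cardOd: "card Od = (n - s) div 2" unfolding Od_eq by (subst card_image) (auto simp: inj_on_def)
  have "{s..<n} = Ev \<union> Od" unfolding Ev_def Od_def by auto
  then have un: "c ` {s..<n} = c ` Ev \<union> c ` Od" by (simp add: image_Un)
  have disj: "c ` Ev \<inter> c ` Od = {}"
  proof (rule ccontr)
    assume "c ` Ev \<inter> c ` Od \<noteq> {}"
    then obtain a b where ab: "a \<in> Ev" "b \<in> Od" "c a = c b" by auto
    then have "a \<noteq> b" unfolding Ev_def Od_def by auto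
    then have "b = Suc (Suc a) \<or> a = Suc (Suc b)" using h ab unfolding Ev_def Od_def
      by (metis (no_types, lifting) linorder_neqE_nat mem_Collect_eq)
    then show False using ab unfolding Ev_def Od_def by auto
  qed
  have "card (c ` {s..<n}) = card (c ` Ev) + card (c ` Od)"
    unfolding un by (rule card_Un_disjoint[OF _ _ disj]) (simp_all add: Ev_def Od_def)
  then show ?thesis using cEv cOd cardEv cardOd by auto
qed

lemma LBpre:
  assumes dc: "dominated_coloring {0..<n} E' k c" and sub: "E' \<subseteq> path_edges n" and sn: "s \<le> n"
    and pre: "\<forall>u<s. \<forall>v<n. u \<noteq> v \<longrightarrow> c u \<noteq> c v"
  shows "\<exists>x y. s + x + y \<le> k \<and> (n - s + 1) div 2 \<le> 2*x \<and> (n-s) div 2 \<le> 2*y"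
proof -
  obtain x y where xy: "card (c ` {s..<n}) = x + y" "(n - s + 1) div 2 \<le> 2*x" "(n-s) div 2 \<le> 2*y"
    using LB[OF dc sub sn] by blast
  have "c ` {0..<n} \<subseteq> {..<k}" using dc by (auto simp: dominated_coloring_def)
  then have ck: "card (c`{0..<n}) \<le> k" by (metis card_lessThan card_mono finite_lessThan)
  have "{0..<n} = {0..<s} \<union> {s..<n}" using sn by auto
  then have un: "c`{0..<n} = c`{0..<s} \<union> c`{s..<n}" by auto
  have disj: "c`{0..<s} \<inter> c`{s..<n} = {}" using pre by fastforce
  have inj: "inj_on c {0..<s}" using pre sn unfolding inj_on_def by (meson atLeastLessThan_iff less_le_trans)
  have "card (c`{0..<n}) = s + card (c`{s..<n})"
    unfolding un by (subst card_Un_disjoint) (auto simp: disj card_image[OF inj])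
  then show ?thesis using ck xy by (intro exI[of _ x] exI[of _ y]) auto
qed


lemma seg:
  assumes L2: "2 \<le> L" and edges: "\<forall>j. Suc j < L \<longrightarrow> {s+j, Suc (s+j)} \<in> E'" and i: "i < fL L"
  shows "\<exists>w. s \<le> w \<and> w < s + L \<and> (\<forall>j<L. gcol j = i \<longrightarrow> adj E' w (s+j))"
proof -
  define m where "m = 4*(i div 2) + i mod 2"
  have jm: "j = m \<or> j = m+2" if "gcol j = i" for j using gcol_inv[of j] that unfolding m_def by simp
  have mL: "m < L" using gcol_m[OF i] unfolding m_def .
  show ?thesis
  proof (cases "Suc m < L")
    case True
    have e1: "{s+m, Suc (s+m)} \<in> E'" using edges True by blast
    have e2: "Suc (Suc m) < L \<Longrightarrow> {s+Suc m, Suc (s+Suc m)} \<in> E'" using edges by blast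
    have "\<forall>j<L. gcol j = i \<longrightarrow> adj E' (s + Suc m) (s+j)"
    proof (intro allI impI)
      fix j assume "j < L" "gcol j = i"
      then have "j = m \<or> j = m+2" using jm by blast
      then show "adj E' (s + Suc m) (s+j)"
      proof
        assume "j = m" then show ?thesis using e1 unfolding adj_def by (simp add: insert_commute)
      next
        assume "j = m+2" then show ?thesis using e2 \<open>j < L\<close> unfolding adj_def by simp
      qed
    qed
    then show ?thesis using True by (intro exI[of _ "s + Suc m"]) auto
  next
    case False
    then have Lm: "L = Suc m" using mL by simp
    then have m1: "m = Suc (m - 1)" using L2 by simp
    have e1: "{s+(m-1), Suc (s+(m-1))} \<in> E'" using edges Lm m1 by (metis lessI)
    have "\<forall>j<L. gcol j = i \<longrightarrow> adj E' (s + (m-1)) (s+j)"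
    proof (intro allI impI)
      fix j assume "j < L" "gcol j = i"
      then have "j = m" using jm Lm by fastforce
      then show "adj E' (s + (m-1)) (s+j)" using e1 m1 unfolding adj_def
        by (metis add_Suc_right n_not_Suc_n)
    qed
    then show ?thesis using Lm by (intro exI[of _ "s + (m-1)"]) auto
  qed
qed

lemma color_path:
  assumes n2: "2 \<le> n"
  shows "dominated_coloring {0..<n} (path_edges n) (fL n) gcol"
  unfolding dominated_coloring_def
proof (intro conjI ballI allI impI)
  fix v assume "v \<in> {0..<n}" then show "gcol v < fL n" using gcol_lt by simp
next
  fix u v assume "adj (path_edges n) u v"
  then have "v = Suc u \<or> u = Suc v" using adj_path by blast
  then show "gcol u \<noteq> gcol v" using gcol_Suc by metis
next
  fix i assume i: "i < fL n"
  have ed: "\<forall>j. Suc j < n \<longrightarrow> {0+j, Suc (0+j)} \<in> path_edges n" using pe_mem by simp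
  obtain w where w: "w < n" "\<forall>j<n. gcol j = i \<longrightarrow> adj (path_edges n) w (0+j)"
    using seg[OF n2 ed i] by auto
  then show "\<exists>w\<in>{0..<n}. \<forall>v\<in>{0..<n}. gcol v = i \<longrightarrow> adj (path_edges n) w v"
    by (intro bexI[of _ w]) auto
qed

lemma color_split:
  assumes a2: "2 \<le> a" and an: "a + 2 \<le> n" and sub: "E' \<subseteq> path_edges n"
    and ed: "\<forall>j. Suc j < n \<longrightarrow> Suc j \<noteq> a \<longrightarrow> {j, Suc j} \<in> E'"
  shows "dominated_coloring {0..<n} E' (fL a + fL (n-a)) (\<lambda>v. if v < a then gcol v else fL a + gcol (v-a))"
  unfolding dominated_coloring_def
proof (intro conjI ballI allI impI)
  fix v assume "v \<in> {0..<n}" then show "(if v < a then gcol v else fL a + gcol (v-a)) < fL a + fL (n-a)"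
    using gcol_lt[of v a] gcol_lt[of "v-a" "n-a"] by auto
next
  fix u v assume "adj E' u v"
  then have uv: "v = Suc u \<or> u = Suc v" using adj_path sub by blast
  have g1: "gcol x < fL a" if "x < a" for x using gcol_lt that .
  have g2: "gcol (Suc x - a) \<noteq> gcol (x - a)" if "a \<le> x" for x
    using gcol_Suc[of "x - a"] that by (simp add: Suc_diff_le)
  show "(if u < a then gcol u else fL a + gcol (u-a)) \<noteq> (if v < a then gcol v else fL a + gcol (v-a))"
    using uv g1[of u] g1[of v] g2[of u] g2[of v] gcol_Suc[of u] gcol_Suc[of v]
    by (auto split: if_splits)
next
  fix i assume i: "i < fL a + fL (n-a)"
  let ?c = "\<lambda>v. if v < a then gcol v else fL a + gcol (v-a)"
  show "\<exists>w\<in>{0..<n}. \<forall>v\<in>{0..<n}. ?c v = i \<longrightarrow> adj E' w v"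
  proof (cases "i < fL a")
    case True
    have ed1: "\<forall>j. Suc j < a \<longrightarrow> {0+j, Suc (0+j)} \<in> E'" using ed an by auto
    obtain w where w: "w < a" "\<forall>j<a. gcol j = i \<longrightarrow> adj E' w (0+j)"
      using seg[OF a2 ed1 True] by auto
    show ?thesis
    proof (intro bexI[of _ w] ballI impI)
      fix v assume "v \<in> {0..<n}" "?c v = i"
      then show "adj E' w v" using w True by (auto split: if_splits)
    qed (use w an in auto)
  next
    case False
    then have i2: "i - fL a < fL (n - a)" using i by auto
    have ed2: "\<forall>j. Suc j < n - a \<longrightarrow> {a+j, Suc (a+j)} \<in> E'" using ed an by auto
    obtain w where w: "a \<le> w" "w < a + (n-a)" "\<forall>j<n-a. gcol j = i - fL a \<longrightarrow> adj E' w (a+j)"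
      using seg[OF _ ed2 i2] an by fastforce
    show ?thesis
    proof (intro bexI[of _ w] ballI impI)
      fix v assume v: "v \<in> {0..<n}" "?c v = i"
      then have "\<not> v < a" using False gcol_lt[of v a] by (auto split: if_splits)
      then have j: "v - a < n - a" "gcol (v - a) = i - fL a" "a + (v - a) = v" using v by auto
      show "adj E' w v" using w(3) j by metis
    qed (use w an in auto)
  qed
qed

lemma chi_le: "dominated_coloring V E k c \<Longrightarrow> chi_dom V E \<le> k"
  unfolding chi_dom_def by (auto intro: Least_le)

lemma chi_ge:
  assumes "dominated_coloring V E k0 c0" and "\<And>k c. dominated_coloring V E k c \<Longrightarrow> m \<le> k"
  shows "m \<le> chi_dom V E"
proof -
  have "\<exists>c. dominated_coloring V E (chi_dom V E) c"
    unfolding chi_dom_def by (rule LeastI_ex) (use assms(1) in blast)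
  then show ?thesis using assms(2) by blast
qed

lemma triv_col: "no_isolated {0..<n} E' \<Longrightarrow> dominated_coloring {0..<n} E' n (\<lambda>v. v)"
  unfolding no_isolated_def dominated_coloring_def adj_def by auto

lemma noiso:
  assumes "\<forall>v<n. (Suc v < n \<and> {v, Suc v} \<notin> F) \<or> (0 < v \<and> {v - 1, v} \<notin> F)"
  shows "no_isolated {0..<n} (path_edges n - F)"
  unfolding no_isolated_def
proof
  fix v assume "v \<in> {0..<n}"
  then have "(Suc v < n \<and> {v, Suc v} \<notin> F) \<or> (0 < v \<and> {v - 1, v} \<notin> F)" using assms by auto
  then show "\<exists>w\<in>{0..<n}. adj (path_edges n - F) w v"
  proof
    assume h: "Suc v < n \<and> {v, Suc v} \<notin> F"
    then show ?thesis unfolding adj_def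
      by (intro bexI[of _ "Suc v"]) (auto simp: insert_commute pe_mem)
  next
    assume h: "0 < v \<and> {v - 1, v} \<notin> F"
    then have "Suc (v-1) = v" by simp
    then show ?thesis unfolding adj_def using h \<open>v \<in> {0..<n}\<close> pe_mem[of "v-1" n]
      by (intro bexI[of _ "v-1"]) auto
  qed
qed


theorem mainTheorem13:
  fixes n :: nat
  assumes "n \<ge> 4"
  shows "B_dom {0..<n} (path_edges n) = (if n mod 4 = 2 then 2 else 1)"
proof -
  let ?V = "{0..<n}"
  let ?E = "path_edges n"
  let ?P = "\<lambda>m. \<exists>F. F \<subseteq> ?E \<and> card F = m \<and> no_isolated ?V (?E - F) \<and> chi_dom ?V (?E - F) \<noteq> chi_dom ?V ?E"
  have n2: "2 \<le> n" using assms by simp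
  have finE: "finite ?E"
    by (rule finite_subset[of _ "Pow {0..<n}"]) (auto simp: path_edges_def)
  have chiE: "chi_dom ?V ?E = fL n"
  proof (rule antisym)
    show "chi_dom ?V ?E \<le> fL n" using color_path[OF n2] by (rule chi_le)
    show "fL n \<le> chi_dom ?V ?E"
    proof (rule chi_ge[OF color_path[OF n2]])
      fix k c assume dc: "dominated_coloring ?V ?E k c"
      obtain x y where "0 + x + y \<le> k" "(n - 0 + 1) div 2 \<le> 2*x" "(n-0) div 2 \<le> 2*y"
        using LBpre[OF dc subset_refl, of 0] by auto
      then show "fL n \<le> k" using fL_path by simp
    qed
  qed
  have lowF: "fL n \<le> chi_dom ?V (?E - F)" if ni: "no_isolated ?V (?E - F)" for F
  proof (rule chi_ge[OF triv_col[OF ni]])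
    fix k c assume dc: "dominated_coloring ?V (?E - F) k c"
    obtain x y where "0 + x + y \<le> k" "(n - 0 + 1) div 2 \<le> 2*x" "(n-0) div 2 \<le> 2*y"
      using LBpre[OF dc Diff_subset, of 0] by auto
    then show "fL n \<le> k" using fL_path by simp
  qed
  have not0: "\<not> ?P 0"
  proof
    assume "?P 0"
    then obtain F where F: "F \<subseteq> ?E" "card F = 0" "chi_dom ?V (?E - F) \<noteq> chi_dom ?V ?E" by blast
    have "finite F" using F(1) finE by (rule finite_subset)
    then have "F = {}" using F(2) by simp
    then show False using F(3) by simp
  qed
  show ?thesis
  proof (cases "n mod 4 = 2")
    case False
    let ?F = "{{1::nat, 2}}"
    have sub: "?F \<subseteq> ?E" using pe_mem[of 1 n] assms by (simp add: numeral_2_eq_2)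
    have ni: "no_isolated ?V (?E - ?F)"
    proof (rule noiso, intro allI impI)
      fix v assume v: "v < n"
      show "(Suc v < n \<and> {v, Suc v} \<notin> ?F) \<or> (0 < v \<and> {v - 1, v} \<notin> ?F)"
      proof (cases "v = 1")
        case True then show ?thesis by (auto simp: doubleton_eq_iff)
      next
        case False then show ?thesis using v assms by (cases "Suc v < n") (auto simp: doubleton_eq_iff)
      qed
    qed
    have "Suc (fL n) \<le> chi_dom ?V (?E - ?F)"
    proof (rule chi_ge[OF triv_col[OF ni]])
      fix k c assume dc: "dominated_coloring ?V (?E - ?F) k c"
      have pre: "\<forall>u<2. \<forall>v<n. u \<noteq> v \<longrightarrow> c u \<noteq> c v"
      proof (intro allI impI notI)
        fix u v assume uv: "u < 2" "v < n" "u \<noteq> v" "c u = c v"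
        show False
        proof (cases "u < v")
          case True
          have "{u, Suc u} \<in> ?E - ?F" "{Suc u, Suc (Suc u)} \<in> ?E - ?F"
            using same_col[OF dc Diff_subset, of u v] uv True by auto
          then show False using uv(1) by (auto simp: less_Suc_eq numeral_2_eq_2)
        next
          case False
          then have "u = Suc (Suc v)" using same_col[OF dc Diff_subset, of v u] uv assms n2 by auto
          then show False using uv(1) by simp
        qed
      qed
      obtain x y where "2 + x + y \<le> k" "(n - 2 + 1) div 2 \<le> 2*x" "(n-2) div 2 \<le> 2*y"
        using LBpre[OF dc Diff_subset _ pre] assms by auto
      then have "fL n < k" by (rule fL_1[OF assms False])
      then show "Suc (fL n) \<le> k" by simp
    qed
    then have P1: "?P 1" using sub ni chiE by (intro exI[of _ ?F]) auto
    have "(LEAST m. ?P m) = 1"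
    proof (rule Least_equality[of ?P 1, OF P1])
      fix m assume "?P m" then show "1 \<le> m" using not0 by (cases m) auto
    qed
    then show ?thesis unfolding B_dom_def using False by simp
  next
    case True
    then have n6: "6 \<le> n" using assms by presburger
    let ?F = "{{1::nat, 2}, {3, 4}}"
    have sub: "?F \<subseteq> ?E" using pe_mem[of 1 n] pe_mem[of 3 n] n6 by (simp add: numeral_eq_Suc)
    have cF: "card ?F = 2" by (simp add: doubleton_eq_iff)
    have ni: "no_isolated ?V (?E - ?F)"
    proof (rule noiso, intro allI impI)
      fix v assume v: "v < n"
      show "(Suc v < n \<and> {v, Suc v} \<notin> ?F) \<or> (0 < v \<and> {v - 1, v} \<notin> ?F)"
      proof (cases "v = 1 \<or> v = 3")
        case True then show ?thesis by (auto simp: doubleton_eq_iff)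
      next
        case False then show ?thesis using v n6 by (cases "Suc v < n") (auto simp: doubleton_eq_iff)
      qed
    qed
    have "Suc (fL n) \<le> chi_dom ?V (?E - ?F)"
    proof (rule chi_ge[OF triv_col[OF ni]])
      fix k c assume dc: "dominated_coloring ?V (?E - ?F) k c"
      have pre: "\<forall>u<4. \<forall>v<n. u \<noteq> v \<longrightarrow> c u \<noteq> c v"
      proof (intro allI impI notI)
        fix u v assume uv: "u < 4" "v < n" "u \<noteq> v" "c u = c v"
        show False
        proof (cases "u < v")
          case True
          have "{u, Suc u} \<in> ?E - ?F" "{Suc u, Suc (Suc u)} \<in> ?E - ?F"
            using same_col[OF dc Diff_subset, of u v] uv True by auto
          then show False using uv(1) unfolding r4 by (auto simp: doubleton_eq_iff)
        next
          case False
          then have "u = Suc (Suc v)" "{v, Suc v} \<in> ?E - ?F" "{Suc v, Suc (Suc v)} \<in> ?E - ?F"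
            using same_col[OF dc Diff_subset, of v u] uv assms n2 by auto
          then show False using uv(1) by (auto simp: less_Suc_eq doubleton_eq_iff)
        qed
      qed
      obtain x y where "4 + x + y \<le> k" "(n - 4 + 1) div 2 \<le> 2*x" "(n-4) div 2 \<le> 2*y"
        using LBpre[OF dc Diff_subset _ pre] assms by auto
      then have "fL n < k" by (rule fL_2[OF assms])
      then show "Suc (fL n) \<le> k" by simp
    qed
    then have P2: "?P 2" using sub cF ni chiE by (intro exI[of _ ?F]) auto
    have not1: "\<not> ?P 1"
    proof
      assume "?P 1"
      then obtain F where F: "F \<subseteq> ?E" "card F = 1" "no_isolated ?V (?E - F)"
        "chi_dom ?V (?E - F) \<noteq> chi_dom ?V ?E" by blast
      obtain e where e: "F = {e}" using F(2) card_1_singletonE by blast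
      obtain i where i: "e = {i, Suc i}" "Suc i < n" using F(1) e by (auto simp: path_edges_def)
      have i0: "i \<noteq> 0"
      proof
        assume "i = 0"
        have "(0::nat) \<in> ?V" using assms by simp
        then obtain w where w: "w < n" "adj (?E - F) w 0" using F(3) unfolding no_isolated_def by fastforce
        then have "w = 1" using adj_path[OF w(2) Diff_subset] by auto
        then show False using w(2) e i \<open>i = 0\<close> unfolding adj_def by (auto simp: insert_commute)
      qed
      have i1: "Suc (Suc i) \<noteq> n"
      proof
        assume h: "Suc (Suc i) = n"
        have "Suc i \<in> ?V" using i by simp
        then obtain w where w: "w < n" "adj (?E - F) w (Suc i)" using F(3) unfolding no_isolated_def by fastforce
        then have "w = i" using adj_path[OF w(2) Diff_subset] h by auto
        then show False using w(2) e i unfolding adj_def by auto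
      qed
      have a2: "2 \<le> Suc i" using i0 by simp
      have an: "Suc i + 2 \<le> n" using i i1 by simp
      have ed: "\<forall>j. Suc j < n \<longrightarrow> Suc j \<noteq> Suc i \<longrightarrow> {j, Suc j} \<in> ?E - F"
        using e i pe_mem by (auto simp: doubleton_eq_iff)
      have "chi_dom ?V (?E - F) \<le> fL (Suc i) + fL (n - Suc i)"
        by (rule chi_le[OF color_split[OF a2 an Diff_subset ed]])
      also have "\<dots> = fL n" using fL_split[OF True] an by simp
      finally have "chi_dom ?V (?E - F) = chi_dom ?V ?E" using lowF[OF F(3)] chiE by simp
      then show False using F(4) by simp
    qed
    have "(LEAST m. ?P m) = 2"
    proof (rule Least_equality[of ?P 2, OF P2])
      fix m assume "?P m" then show "2 \<le> m" using not0 not1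
        by (cases m; cases "m - 1") auto
    qed
    then show ?thesis unfolding B_dom_def using True by simp
  qed
qed
end
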